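(* For $k=1,2,\dots$ let $f_{\pm k}(x)=x\pm e^{e^k}$ and $p_{\pm k}=\frac12\left(\frac1k-\frac1{k+1}\right)$, and let $\mu$ be the probability measure on $\mathrm{Homeo}_+(\mathbb{R})$ with $\mu(\{f_{\pm k}\})=p_{\pm k}$. Then for every $x\in\mathbb{R}$ and every compact interval $J\subset\mathbb{R}$, almost surely $F_n(x)\in J$ for only finitely many $n$. The same conclusion holds if each $f_{\pm k}$ is replaced by a map $\tilde f_{\pm k}:\mathbb{R}\to\mathbb{R}$ (chosen with the same probability $p_{\pm k}$) such that $\sup_{k}\sup_{x\in\mathbb{R}}|\tilde f_{\pm k}(x)-f_{\pm k}(x)|<\infty$.
   Context: Given the maps and probabilities, let $g_1,g_2,\dots$ be i.i.d. random maps, with $g_n$ equal to the map indexed by $\pm k$ with probability $p_{\pm k}$, and $F_n=g_n\circ\cdots\circ g_1$. *)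

theory Defs
  imports "HOL-Probability.Probability"
begin

text \<open>The maps f_{+k}, f_{-k} are indexed by the nonzero integers j = k and j = -k:
  f_j(x) = x + sgn(j) * exp(exp |j|).  (Index 0 is never chosen: it has probability 0.)\<close>
definition shift_map :: "int \<Rightarrow> real \<Rightarrow> real" where
  "shift_map j x = x + of_int (sgn j) * exp (exp (of_int \<bar>j\<bar>))"

definition pw :: "int \<Rightarrow> real" where
  "pw j = (if j = 0 then 0 else (1/2) * (1 / of_int \<bar>j\<bar> - 1 / (of_int \<bar>j\<bar> + 1)))"

primrec comp_seq :: "(nat \<Rightarrow> 'a \<Rightarrow> 'a) \<Rightarrow> nat \<Rightarrow> 'a \<Rightarrow> 'a" where
  "comp_seq g 0 = id"
| "comp_seq g (Suc n) = g (Suc n) \<circ> comp_seq g n"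

end

theory Submission
  imports Defs "HOL-Real_Asymp.Real_Asymp"
begin


definition EE :: "int \<Rightarrow> real" where "EE z = exp (exp (of_int z))"

definition pl :: "nat \<Rightarrow> real" where "pl k = (if k = 0 then 0 else 1 / real k - 1 / (real k + 1))"

locale walk = prob_space M for M :: "'w measure" +
  fixes \<xi> :: "nat \<Rightarrow> 'w \<Rightarrow> int"
  assumes meas: "\<And>n. n \<ge> 1 \<Longrightarrow> \<xi> n \<in> measurable M (count_space UNIV)"
    and indep: "indep_vars (\<lambda>_. count_space UNIV) \<xi> {1..}"
    and distr: "\<And>n j. n \<ge> 1 \<Longrightarrow> measure M {\<omega> \<in> space M. \<xi> n \<omega> = j} = pw j"
begin

definition ev :: "nat \<Rightarrow> int set \<Rightarrow> 'w set" where "ev i A = {\<omega> \<in> space M. \<xi> i \<omega> \<in> A}"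

lemma ev_alt: "ev i A = \<xi> i -` A \<inter> space M" unfolding ev_def by auto

lemma ev_sets[intro, simp]: "1 \<le> i \<Longrightarrow> ev i A \<in> events"
  unfolding ev_alt by (rule measurable_sets[OF meas]) auto

lemma prob_inter:
  assumes "J \<noteq> {}" "finite J" "J \<subseteq> {1..}"
  shows "prob (\<Inter>i\<in>J. ev i (A i)) = (\<Prod>i\<in>J. prob (ev i (A i)))"
  unfolding ev_alt by (rule indep_varsD[OF indep assms]) auto

lemma prob_single: "1 \<le> i \<Longrightarrow> prob (ev i {j}) = pw j"
  using distr[of i j] unfolding ev_def by simp

lemma prob_lev: assumes "1 \<le> i" shows "prob (ev i {z. \<bar>z\<bar> = int k}) = pl k"
proof (cases "k = 0")
  case True
  then have "ev i {z. \<bar>z\<bar> = int k} = ev i {0}" unfolding ev_def by auto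
  then show ?thesis using prob_single[OF assms, of 0] True by (simp add: pw_def pl_def)
next
  case False
  have "ev i {z. \<bar>z\<bar> = int k} = ev i {int k} \<union> ev i {- int k}" unfolding ev_def by auto
  moreover have "ev i {int k} \<inter> ev i {- int k} = {}" using False unfolding ev_def by auto
  ultimately have "prob (ev i {z. \<bar>z\<bar> = int k}) = prob (ev i {int k}) + prob (ev i {- int k})"
    using assms by (simp add: finite_measure_Union)
  also have "\<dots> = pl k" using prob_single[OF assms] False by (simp add: pw_def pl_def)
  finally show ?thesis .
qed

lemma prob_le: assumes "1 \<le> i" shows "prob (ev i {z. \<bar>z\<bar> \<le> int m}) = 1 - 1 / (real m + 1)"
proof (induction m)
  case 0
  have "ev i {z. \<bar>z\<bar> \<le> int 0} = ev i {0}" unfolding ev_def by auto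
  then show ?case using prob_single[OF assms, of 0] by (simp add: pw_def)
next
  case (Suc m)
  have "ev i {z. \<bar>z\<bar> \<le> int (Suc m)} = ev i {z. \<bar>z\<bar> \<le> int m} \<union> ev i {z. \<bar>z\<bar> = int (Suc m)}"
    unfolding ev_def by auto
  moreover have "ev i {z. \<bar>z\<bar> \<le> int m} \<inter> ev i {z. \<bar>z\<bar> = int (Suc m)} = {}" unfolding ev_def by auto
  ultimately have "prob (ev i {z. \<bar>z\<bar> \<le> int (Suc m)}) = prob (ev i {z. \<bar>z\<bar> \<le> int m}) + prob (ev i {z. \<bar>z\<bar> = int (Suc m)})"
    using assms by (simp add: finite_measure_Union)
  also have "\<dots> = 1 - 1 / (real (Suc m) + 1)"
  proof -
    have "pl (Suc m) = 1/(real m + 1) - 1/(real m + 2)" by (simp add: pl_def add.commute)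
    then show ?thesis using Suc prob_lev[OF assms, of "Suc m"] by (simp add: add.commute)
  qed
  finally show ?case .
qed

lemma prob_gt: assumes "1 \<le> i" shows "prob (ev i {z. \<bar>z\<bar> > int m}) = 1 / (real m + 1)"
proof -
  have "ev i {z. \<bar>z\<bar> > int m} = space M - ev i {z. \<bar>z\<bar> \<le> int m}" unfolding ev_def by auto
  then show ?thesis using prob_compl[of "ev i {z. \<bar>z\<bar> \<le> int m}"] prob_le[OF assms, of m] assms by simp
qed

lemma UN_bound:
  assumes "finite S" "\<And>x. x \<in> S \<Longrightarrow> A x \<in> events" "\<And>x. x \<in> S \<Longrightarrow> prob (A x) \<le> f x"
  shows "prob (\<Union>x\<in>S. A x) \<le> sum f S"
  using finite_measure_subadditive_finite[OF assms(1)] assms(2) sum_mono[of S "\<lambda>x. prob (A x)" f] assms(3)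
  by (meson image_subsetI order_trans)

end



lemma EE_mono: "a \<le> b \<Longrightarrow> EE a \<le> EE b" unfolding EE_def by simp
lemma EE_ge1: "EE a \<ge> 1" unfolding EE_def by simp

lemma dom_lemma:
  fixes lv :: "nat \<Rightarrow> int" and \<sigma> :: "nat \<Rightarrow> int"
  assumes fin: "finite I" and le: "\<And>i. i \<in> I \<Longrightarrow> lv i \<le> K"
    and sg: "\<And>i. \<bar>\<sigma> i\<bar> \<le> 1"
    and nz: "(\<Sum>i\<in>{i\<in>I. lv i = K}. \<sigma> i) \<noteq> 0"
  shows "\<bar>\<Sum>i\<in>I. of_int (\<sigma> i) * EE (lv i)\<bar> \<ge> EE K - real (card I) * EE (K - 1)"
proof -
  define T where "T = {i\<in>I. lv i = K}"
  have TI: "T \<subseteq> I" unfolding T_def by auto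
  have split: "(\<Sum>i\<in>I. of_int (\<sigma> i) * EE (lv i)) = (\<Sum>i\<in>T. of_int (\<sigma> i) * EE (lv i)) + (\<Sum>i\<in>I - T. of_int (\<sigma> i) * EE (lv i))"
    using sum.subset_diff[OF TI fin] by (simp add: add.commute)
  have t1: "(\<Sum>i\<in>T. of_int (\<sigma> i) * EE (lv i)) = of_int (\<Sum>i\<in>T. \<sigma> i) * EE K"
    unfolding T_def by (simp add: sum_distrib_right)
  have "\<bar>of_int (\<Sum>i\<in>T. \<sigma> i) :: real\<bar> \<ge> 1" using nz unfolding T_def by linarith
  then have a1: "\<bar>(\<Sum>i\<in>T. of_int (\<sigma> i) * EE (lv i))\<bar> \<ge> EE K"
    unfolding t1 abs_mult using EE_ge1[of K]
    by (metis abs_of_nonneg mult_cancel_right1 mult_right_mono order_trans zero_le_one)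
  have "\<bar>\<Sum>i\<in>I - T. of_int (\<sigma> i) * EE (lv i)\<bar> \<le> (\<Sum>i\<in>I - T. \<bar>of_int (\<sigma> i) * EE (lv i)\<bar>)"
    by (rule sum_abs)
  also have "\<dots> \<le> (\<Sum>i\<in>I - T. EE (K - 1))"
  proof (rule sum_mono)
    fix i assume i: "i \<in> I - T"
    then have "lv i \<le> K - 1" using le unfolding T_def by force
    then have "EE (lv i) \<le> EE (K - 1)" by (rule EE_mono)
    moreover have "\<bar>of_int (\<sigma> i) :: real\<bar> \<le> 1" using sg[of i] by linarith
    ultimately show "\<bar>of_int (\<sigma> i) * EE (lv i)\<bar> \<le> EE (K - 1)"
      unfolding abs_mult using EE_ge1[of "lv i"]
      by (metis abs_ge_zero abs_of_nonneg mult_le_one mult_mono' order_trans zero_le_one mult_1)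
  qed
  also have "\<dots> = real (card (I - T)) * EE (K - 1)" by simp
  also have "\<dots> \<le> real (card I) * EE (K - 1)"
    using EE_ge1[of "K-1"] card_mono[OF fin, of "I - T"] by (intro mult_right_mono) auto
  finally have a2: "\<bar>\<Sum>i\<in>I - T. of_int (\<sigma> i) * EE (lv i)\<bar> \<le> real (card I) * EE (K - 1)" .
  show ?thesis unfolding split using a1 a2 by linarith
qed

lemma perturb:
  fixes ft :: "int \<Rightarrow> real \<Rightarrow> real" and \<zeta> :: "nat \<Rightarrow> int"
  assumes C: "\<forall>j. j \<noteq> 0 \<longrightarrow> (\<forall>y. \<bar>ft j y - shift_map j y\<bar> \<le> C)"
    and nz: "\<And>i. 1 \<le> i \<Longrightarrow> i \<le> n \<Longrightarrow> \<zeta> i \<noteq> 0"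
  shows "\<bar>comp_seq (\<lambda>i. ft (\<zeta> i)) n x - (x + (\<Sum>i\<in>{1..n}. of_int (sgn (\<zeta> i)) * EE \<bar>\<zeta> i\<bar>))\<bar> \<le> real n * C"
  using nz
proof (induction n)
  case 0
  then show ?case by simp
next
  case (Suc n)
  let ?y = "comp_seq (\<lambda>i. ft (\<zeta> i)) n x"
  have IH: "\<bar>?y - (x + (\<Sum>i\<in>{1..n}. of_int (sgn (\<zeta> i)) * EE \<bar>\<zeta> i\<bar>))\<bar> \<le> real n * C"
    using Suc by auto
  have "\<zeta> (Suc n) \<noteq> 0" using Suc.prems by auto
  then have e: "\<bar>ft (\<zeta> (Suc n)) ?y - shift_map (\<zeta> (Suc n)) ?y\<bar> \<le> C" using C by blast
  have sm: "shift_map (\<zeta> (Suc n)) ?y = ?y + of_int (sgn (\<zeta> (Suc n))) * EE \<bar>\<zeta> (Suc n)\<bar>"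
    unfolding shift_map_def EE_def by simp
  have "(\<Sum>i\<in>{1..Suc n}. of_int (sgn (\<zeta> i)) * EE \<bar>\<zeta> i\<bar>) = (\<Sum>i\<in>{1..n}. of_int (sgn (\<zeta> i)) * EE \<bar>\<zeta> i\<bar>) + of_int (sgn (\<zeta> (Suc n))) * EE \<bar>\<zeta> (Suc n)\<bar>"
    by simp
  then show ?case using IH e sm by (simp add: algebra_simps)
qed




lemma comb:
  fixes \<zeta> :: "nat \<Rightarrow> int" and m :: int
  assumes m0: "0 \<le> m"
    and a: "a1 \<in> {1..n}" "a2 \<in> {1..n}" "a3 \<in> {1..n}" "a1 \<noteq> a2" "a1 \<noteq> a3" "a2 \<noteq> a3"
       "\<bar>\<zeta> a1\<bar> > m" "\<bar>\<zeta> a2\<bar> > m" "\<bar>\<zeta> a3\<bar> > m"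
    and no3: "\<not>(\<exists>i j l. i\<in>{1..n} \<and> j\<in>{1..n} \<and> l\<in>{1..n} \<and> distinct [i,j,l] \<and> \<bar>\<zeta> i\<bar> > m \<and> \<bar>\<zeta> j\<bar> = \<bar>\<zeta> i\<bar> \<and> \<bar>\<zeta> l\<bar> = \<bar>\<zeta> i\<bar>)"
    and no22: "\<not>(\<exists>i j u v. i\<in>{1..n} \<and> j\<in>{1..n} \<and> u\<in>{1..n} \<and> v\<in>{1..n} \<and> distinct [i,j,u,v] \<and> \<bar>\<zeta> i\<bar> > m \<and> \<bar>\<zeta> j\<bar> = \<bar>\<zeta> i\<bar> \<and> \<bar>\<zeta> u\<bar> > m \<and> \<bar>\<zeta> v\<bar> = \<bar>\<zeta> u\<bar>)"
  shows "\<exists>K > m. \<bar>\<Sum>i\<in>{1..n}. of_int (sgn (\<zeta> i)) * EE \<bar>\<zeta> i\<bar>\<bar> \<ge> EE K - real n * EE (K - 1)"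
proof -
  define lv where "lv i = \<bar>\<zeta> i\<bar>" for i
  define \<sigma> where "\<sigma> i = sgn (\<zeta> i)" for i
  define I0 where "I0 = {1..n}"
  have fin0: "finite I0" unfolding I0_def by simp
  have sg: "\<And>i. \<bar>\<sigma> i\<bar> \<le> 1" unfolding \<sigma>_def by (simp add: abs_sgn_eq)
  have sgnz: "\<And>i. lv i > m \<Longrightarrow> \<sigma> i \<noteq> 0" unfolding \<sigma>_def lv_def using m0 by (auto simp: sgn_0_0)
  define K where "K = Max (lv ` I0)"
  have ne0: "lv ` I0 \<noteq> {}" using a(1) unfolding I0_def by auto
  have Kge: "\<And>i. i \<in> I0 \<Longrightarrow> lv i \<le> K" unfolding K_def using fin0 by simp
  have Kin: "K \<in> lv ` I0" unfolding K_def using fin0 ne0 by (intro Max_in) auto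
  have Km: "K > m" using Kge[of a1] a(1,7) unfolding I0_def lv_def by force
  define T where "T = {i\<in>I0. lv i = K}"
  obtain u where u: "u \<in> T" using Kin unfolding T_def by auto
  have T3: "False" if "i\<in>T" "j\<in>T" "l\<in>T" "distinct [i,j,l]" for i j l
  proof -
    from that have "i\<in>{1..n}" "j\<in>{1..n}" "l\<in>{1..n}" "\<bar>\<zeta> i\<bar> > m" "\<bar>\<zeta> j\<bar> = \<bar>\<zeta> i\<bar>" "\<bar>\<zeta> l\<bar> = \<bar>\<zeta> i\<bar>"
      using Km unfolding T_def I0_def lv_def by auto
    then have "\<exists>i j l. i\<in>{1..n} \<and> j\<in>{1..n} \<and> l\<in>{1..n} \<and> distinct [i,j,l] \<and> \<bar>\<zeta> i\<bar> > m \<and> \<bar>\<zeta> j\<bar> = \<bar>\<zeta> i\<bar> \<and> \<bar>\<zeta> l\<bar> = \<bar>\<zeta> i\<bar>"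
      using that(4) by (intro exI[of _ i] exI[of _ j] exI[of _ l]) simp
    with no3 show False by blast
  qed
  show ?thesis
  proof (cases "(\<Sum>i\<in>T. \<sigma> i) \<noteq> 0")
    case True
    have "\<bar>\<Sum>i\<in>I0. of_int (\<sigma> i) * EE (lv i)\<bar> \<ge> EE K - real (card I0) * EE (K - 1)"
      using dom_lemma[of I0 lv K \<sigma>, OF fin0 Kge sg] True unfolding T_def by blast
    then show ?thesis using Km unfolding I0_def \<sigma>_def lv_def by auto
  next
    case False
    then have s0: "(\<Sum>i\<in>T. \<sigma> i) = 0" by simp
    have "T \<noteq> {u}" using s0 sgnz[of u] u unfolding T_def using Km by auto
    then obtain v where v: "v \<in> T" "v \<noteq> u" using u by blast
    have Tuv: "T = {u, v}"
    proof
      show "T \<subseteq> {u, v}"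
      proof
        fix w assume "w \<in> T"
        then show "w \<in> {u, v}" using T3[of u v w] u v by auto
      qed
    qed (use u v in auto)
    have suv: "\<sigma> u + \<sigma> v = 0" using s0 v unfolding Tuv by simp
    define I where "I = I0 - {u, v}"
    have finI: "finite I" unfolding I_def using fin0 by simp
    have uvI0: "{u,v} \<subseteq> I0" using u v unfolding T_def by auto
    have lvuv: "lv u = K" "lv v = K" using u v unfolding T_def by auto
    have sumsplit: "(\<Sum>i\<in>I0. of_int (\<sigma> i) * EE (lv i)) = (\<Sum>i\<in>I. of_int (\<sigma> i) * EE (lv i)) + (of_int (\<sigma> u) * EE (lv u) + of_int (\<sigma> v) * EE (lv v))"
      using sum.subset_diff[OF uvI0 fin0, of "\<lambda>i. of_int (\<sigma> i) * EE (lv i)"] v(2) unfolding I_def by simp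
    have "of_int (\<sigma> u) * EE K + of_int (\<sigma> v) * EE K = of_int (\<sigma> u + \<sigma> v) * EE K"
      by (simp add: distrib_right)
    then have z: "of_int (\<sigma> u) * EE (lv u) + of_int (\<sigma> v) * EE (lv v) = 0"
      using suv lvuv by simp
    obtain a where aI: "a \<in> I" and am: "lv a > m"
    proof -
      have "\<exists>a\<in>{a1,a2,a3}. a \<notin> {u,v}" using a(4,5,6) by auto
      then show ?thesis using that a unfolding I_def I0_def lv_def by auto
    qed
    define K2 where "K2 = Max (lv ` I)"
    have neI: "lv ` I \<noteq> {}" using aI by auto
    have K2ge: "\<And>i. i \<in> I \<Longrightarrow> lv i \<le> K2" unfolding K2_def using finI by simp
    have K2in: "K2 \<in> lv ` I" unfolding K2_def using finI neI by (intro Max_in) auto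
    have K2m: "K2 > m" using K2ge[OF aI] am by simp
    define T2 where "T2 = {i\<in>I. lv i = K2}"
    obtain w where w: "w \<in> T2" using K2in unfolding T2_def by auto
    have T2w: "T2 = {w}"
    proof (rule ccontr)
      assume "T2 \<noteq> {w}"
      then obtain w' where w': "w' \<in> T2" "w' \<noteq> w" using w by blast
      have "distinct [u,v,w,w']" using v w w' unfolding T2_def I_def by auto
      moreover have "u \<in> I0" "v \<in> I0" "w \<in> I0" "w' \<in> I0" using uvI0 w w' unfolding T2_def I_def by auto
      moreover have "lv u > m" "lv v = lv u" "lv w > m" "lv w' = lv w"
        using lvuv Km K2m w w' unfolding T2_def by auto
      ultimately have "\<exists>i j u v. i\<in>{1..n} \<and> j\<in>{1..n} \<and> u\<in>{1..n} \<and> v\<in>{1..n} \<and> distinct [i,j,u,v] \<and> \<bar>\<zeta> i\<bar> > m \<and> \<bar>\<zeta> j\<bar> = \<bar>\<zeta> i\<bar> \<and> \<bar>\<zeta> u\<bar> > m \<and> \<bar>\<zeta> v\<bar> = \<bar>\<zeta> u\<bar>"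
        unfolding I0_def lv_def by (intro exI[of _ u] exI[of _ v] exI[of _ w] exI[of _ w']) simp
      with no22 show False by blast
    qed
    have "(\<Sum>i\<in>{i\<in>I. lv i = K2}. \<sigma> i) \<noteq> 0"
    proof -
      have "lv w = K2" using w unfolding T2_def by auto
      then show ?thesis using T2w sgnz[of w] K2m unfolding T2_def by auto
    qed
    then have "\<bar>\<Sum>i\<in>I. of_int (\<sigma> i) * EE (lv i)\<bar> \<ge> EE K2 - real (card I) * EE (K2 - 1)"
      using dom_lemma[of I lv K2 \<sigma>, OF finI K2ge sg] by blast
    moreover have "card I \<le> n"
    proof -
      have "card I \<le> card I0" unfolding I_def by (rule card_mono[OF fin0]) auto
      then show ?thesis unfolding I0_def by simp
    qed
    moreover have "EE (K2 - 1) \<ge> 0" using EE_ge1[of "K2-1"] by simp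
    ultimately have "\<bar>\<Sum>i\<in>I. of_int (\<sigma> i) * EE (lv i)\<bar> \<ge> EE K2 - real n * EE (K2 - 1)"
    proof -
      assume h: "\<bar>\<Sum>i\<in>I. of_int (\<sigma> i) * EE (lv i)\<bar> \<ge> EE K2 - real (card I) * EE (K2 - 1)"
        "card I \<le> n" "EE (K2 - 1) \<ge> 0"
      have "real (card I) * EE (K2 - 1) \<le> real n * EE (K2 - 1)" using h(2,3) by (intro mult_right_mono) auto
      then show ?thesis using h(1) by linarith
    qed
    then show ?thesis using K2m sumsplit z unfolding I0_def \<sigma>_def lv_def by auto
  qed
qed




lemma dom_num:
  fixes R C :: real assumes R0: "0 \<le> R" and C0: "0 \<le> C"
  shows "\<exists>N. \<forall>n\<ge>N. \<forall>K::int. real_of_int K > real n powr (9/10) \<longrightarrow> EE K - real n * EE (K - 1) > R + real n * C"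
proof -
  have "eventually (\<lambda>n::nat. real n ^ 2 \<le> exp (real n powr (9/10))) at_top" by real_asymp
  then obtain N0 where N0: "\<And>n. n \<ge> N0 \<Longrightarrow> real n ^ 2 \<le> exp (real n powr (9/10))"
    by (auto simp: eventually_at_top_linorder)
  define N where "N = max (max N0 1) (nat \<lceil>R + C + 2\<rceil>)"
  have "\<forall>n\<ge>N. \<forall>K::int. real_of_int K > real n powr (9/10) \<longrightarrow> EE K - real n * EE (K - 1) > R + real n * C"
  proof (intro allI impI)
    fix n :: nat and K :: int
    assume n: "n \<ge> N" and K: "real_of_int K > real n powr (9/10)"
    have n1: "real n \<ge> 1" using n unfolding N_def by auto
    have nRC: "real n \<ge> R + C + 2" using n unfolding N_def by linarith
    have t1: "real n powr (9/10) \<ge> 1" using n1 by (simp add: ge_one_powr_ge_zero)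
    define y where "y = real_of_int K"
    have y1: "y \<ge> 1" using K t1 unfolding y_def by linarith
    define X where "X = exp (exp y - exp (y - 1))"
    have EK: "EE K = EE (K - 1) * X" unfolding EE_def X_def y_def by (simp add: exp_add[symmetric])
    have e2: "exp (1::real) \<ge> 2" using exp_ge_add_one_self[of "1::real"] by simp
    have "exp y = exp (y - 1) * exp 1" by (simp add: exp_add[symmetric])
    moreover have "exp (y - 1) * exp 1 \<ge> exp (y - 1) * 2" using e2 by (intro mult_left_mono) auto
    ultimately have "exp y - exp (y - 1) \<ge> exp (y - 1)" by linarith
    moreover have "exp (y - 1) \<ge> y" using exp_ge_add_one_self[of "y - 1"] by simp
    ultimately have "X \<ge> exp y" unfolding X_def by simp
    moreover have "exp y \<ge> exp (real n powr (9/10))" using K unfolding y_def by simp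
    moreover have "exp (real n powr (9/10)) \<ge> real n ^ 2" using N0[of n] n unfolding N_def by simp
    ultimately have Xn: "X \<ge> real n ^ 2" by linarith
    have "real n ^ 2 \<ge> real n * (R + C + 2)" unfolding power2_eq_square using nRC n1
      by (intro mult_left_mono) auto
    moreover have "real n * R \<ge> R" using n1 R0 by (simp add: mult_le_cancel_right1)
    ultimately have Xb: "X - real n \<ge> R + real n * C + 1" using Xn n1 by (simp add: algebra_simps)
    have "EE K - real n * EE (K - 1) = EE (K - 1) * (X - real n)" unfolding EK by (simp add: algebra_simps)
    also have "\<dots> \<ge> 1 * (X - real n)"
    proof -
      have "0 \<le> R + real n * C + 1" using R0 C0 by simp
      then have "0 \<le> X - real n" using Xb by linarith
      then show ?thesis using EE_ge1[of "K-1"] by (intro mult_right_mono) auto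
    qed
    finally show "EE K - real n * EE (K - 1) > R + real n * C" using Xb by simp
  qed
  then show ?thesis by blast
qed

lemma pl_le: assumes "k \<ge> Suc m" shows "pl k \<le> 1 / (real m + 1) ^ 2" "0 \<le> pl k"
proof -
  have k: "real k \<ge> real m + 1" using assms by simp
  have "pl k = 1 / (real k * (real k + 1))" using assms by (simp add: pl_def field_simps)
  also have "\<dots> \<le> 1 / ((real m + 1) * (real m + 1))"
    using k by (intro divide_left_mono mult_mono) auto
  finally show "pl k \<le> 1 / (real m + 1) ^ 2" by (simp add: power2_eq_square)
  show "0 \<le> pl k" using assms by (simp add: pl_def field_simps)
qed

lemma pl_sum_aux: "(\<Sum>k\<in>{Suc m..m+d}. pl k) = 1/(real m + 1) - 1/(real m + real d + 1)"
proof (induction d)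
  case 0 then show ?case by simp
next
  case (Suc d)
  have "{Suc m..m + Suc d} = insert (Suc (m + d)) {Suc m..m+d}" by auto
  then have "(\<Sum>k\<in>{Suc m..m+Suc d}. pl k) = pl (Suc (m+d)) + (\<Sum>k\<in>{Suc m..m+d}. pl k)" by simp
  then show ?case using Suc by (simp add: pl_def algebra_simps)
qed

lemma pl_sum: "(\<Sum>k\<in>{Suc m..N}. pl k) \<le> 1/(real m + 1)"
proof (cases "N \<le> m")
  case True then show ?thesis by simp
next
  case False
  then obtain d where "N = m + d" by (metis le_add_diff_inverse nat_le_linear)
  then show ?thesis using pl_sum_aux[of m d] by simp
qed

lemma pl_sum2: "(\<Sum>k\<in>{Suc m..N}. pl k ^ 2) \<le> 1/(real m + 1) ^ 3"
proof -
  have "(\<Sum>k\<in>{Suc m..N}. pl k ^ 2) \<le> (\<Sum>k\<in>{Suc m..N}. pl k * (1 / (real m + 1) ^ 2))"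
  proof (intro sum_mono)
    fix k assume "k \<in> {Suc m..N}"
    then have a: "pl k \<le> 1 / (real m + 1) ^ 2" "0 \<le> pl k" using pl_le by auto
    show "pl k ^ 2 \<le> pl k * (1 / (real m + 1) ^ 2)" unfolding power2_eq_square[of "pl k"]
      using mult_left_mono[OF a] .
  qed
  also have "\<dots> = (\<Sum>k\<in>{Suc m..N}. pl k) * (1 / (real m + 1) ^ 2)" by (rule sum_distrib_right[symmetric])
  also have "\<dots> \<le> 1/(real m + 1) * (1 / (real m + 1) ^ 2)" using pl_sum by (intro mult_right_mono) auto
  finally show ?thesis by (simp add: power3_eq_cube power2_eq_square mult.assoc)
qed

lemma pl_sum3: "(\<Sum>k\<in>{Suc m..N}. pl k ^ 3) \<le> 1/(real m + 1) ^ 5"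
proof -
  have "(\<Sum>k\<in>{Suc m..N}. pl k ^ 3) \<le> (\<Sum>k\<in>{Suc m..N}. pl k * (1 / (real m + 1) ^ 2)^2)"
  proof (intro sum_mono)
    fix k assume "k \<in> {Suc m..N}"
    then have a: "pl k \<le> 1 / (real m + 1) ^ 2" "0 \<le> pl k" using pl_le by auto
    have "pl k ^ 2 \<le> (1 / (real m + 1) ^ 2)^2" using a by (intro power_mono) auto
    have "pl k ^ 3 = pl k * pl k ^ 2" by (simp add: power3_eq_cube power2_eq_square)
    then show "pl k ^ 3 \<le> pl k * (1 / (real m + 1) ^ 2)^2" using mult_left_mono[OF \<open>pl k ^ 2 \<le> _\<close> a(2)] by simp
  qed
  also have "\<dots> = (\<Sum>k\<in>{Suc m..N}. pl k) * (1 / (real m + 1) ^ 2)^2" by (rule sum_distrib_right[symmetric])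
  also have "\<dots> \<le> 1/(real m + 1) * (1 / (real m + 1) ^ 2)^2" using pl_sum by (intro mult_right_mono) auto
  also have "\<dots> = (1/(real m + 1)) * ((1/(real m + 1)) ^ 2)^2" by (simp add: power_one_over)
  also have "\<dots> = (1/(real m + 1)) ^ 5" by algebra
  finally show ?thesis by (simp add: power_one_over)
qed




definition tt :: "nat \<Rightarrow> real" where "tt n = real n powr (9/10)"
definition mm :: "nat \<Rightarrow> nat" where "mm n = nat \<lfloor>tt n\<rfloor>"
definition Kr :: "nat \<Rightarrow> nat set" where "Kr n = {Suc (mm n)..n^3}"
definition Lv :: "nat \<Rightarrow> int set" where "Lv k = {z. \<bar>z\<bar> = int k}"
definition qq :: "nat \<Rightarrow> nat" where "qq n = n div 3"
definition Blk :: "nat \<Rightarrow> nat \<Rightarrow> nat set" where "Blk n b = {b * qq n + 1 .. b * qq n + qq n}"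

lemma tt_nonneg: "0 \<le> tt n" unfolding tt_def by simp
lemma mm_le: "real (mm n) \<le> tt n" unfolding mm_def using tt_nonneg[of n] by simp
lemma mm_gt: "tt n < real (mm n) + 1" unfolding mm_def using tt_nonneg[of n] by linarith

context walk begin

definition "Zs n = (\<Union>i\<in>{1..n}. ev i {0})"
definition "E0s n = (\<Union>i\<in>{1..n}. ev i {z. \<bar>z\<bar> > int (n^3)})"
definition "E1s n = (\<Union>b\<in>{0..<3::nat}. space M \<inter> (\<Inter>i\<in>Blk n b. ev i {z. \<bar>z\<bar> \<le> int (mm n)}))"
definition "E2s n = (\<Union>i\<in>{1..n}. \<Union>j\<in>{1..n}. \<Union>u\<in>{1..n}. \<Union>v\<in>{1..n}. \<Union>k\<in>Kr n. \<Union>k'\<in>Kr n.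
   (if distinct [i,j,u,v] then ev i (Lv k) \<inter> ev j (Lv k) \<inter> ev u (Lv k') \<inter> ev v (Lv k') else {}))"
definition "E3s n = (\<Union>i\<in>{1..n}. \<Union>j\<in>{1..n}. \<Union>l\<in>{1..n}. \<Union>k\<in>Kr n.
   (if distinct [i,j,l] then ev i (Lv k) \<inter> ev j (Lv k) \<inter> ev l (Lv k) else {}))"
definition "Bad n = Zs n \<union> E0s n \<union> E1s n \<union> E2s n \<union> E3s n"

lemma if_ev: "A \<in> events \<Longrightarrow> (if P then A else {}) \<in> events" by simp

lemma space_INT_ev: "finite J \<Longrightarrow> J \<subseteq> {1..} \<Longrightarrow> space M \<inter> (\<Inter>i\<in>J. ev i (A i)) \<in> events"
proof (cases "J = {}")
  case False
  assume "finite J" "J \<subseteq> {1..}"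
  then have "(\<Inter>i\<in>J. ev i (A i)) \<in> events" using False by (intro sets.finite_INT) auto
  then show ?thesis by auto
qed simp

lemma Bad_sets: "Bad n \<in> events"
proof -
  have "Zs n \<in> events" unfolding Zs_def by (intro sets.finite_UN) auto
  moreover have "E0s n \<in> events" unfolding E0s_def by (intro sets.finite_UN) auto
  moreover have "E1s n \<in> events" unfolding E1s_def
    by (intro sets.finite_UN space_INT_ev) (auto simp: Blk_def)
  moreover have "E2s n \<in> events" unfolding E2s_def
    by (intro sets.finite_UN if_ev sets.Int ev_sets) (auto simp: Kr_def)
  moreover have "E3s n \<in> events" unfolding E3s_def
    by (intro sets.finite_UN if_ev sets.Int ev_sets) (auto simp: Kr_def)
  ultimately show ?thesis unfolding Bad_def by auto
qed

lemma UN_card: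
  assumes "finite S" "\<And>x. x \<in> S \<Longrightarrow> A x \<in> events" "\<And>x. x \<in> S \<Longrightarrow> prob (A x) \<le> c"
  shows "prob (\<Union>x\<in>S. A x) \<le> real (card S) * c"
  using UN_bound[OF assms] by simp

lemma prob4:
  assumes "distinct [i,j,u,v]" "1 \<le> i" "1 \<le> j" "1 \<le> u" "1 \<le> v"
  shows "prob (ev i A \<inter> ev j A \<inter> ev u B \<inter> ev v B) = prob (ev i A) * prob (ev j A) * prob (ev u B) * prob (ev v B)"
proof -
  define AA where "AA x = (if x = i \<or> x = j then A else B)" for x
  have "prob (\<Inter>x\<in>{i,j,u,v}. ev x (AA x)) = (\<Prod>x\<in>{i,j,u,v}. prob (ev x (AA x)))"
    using assms by (intro prob_inter) auto
  moreover have "(\<Inter>x\<in>{i,j,u,v}. ev x (AA x)) = ev i A \<inter> ev j A \<inter> ev u B \<inter> ev v B"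
    using assms unfolding AA_def by auto
  moreover have "(\<Prod>x\<in>{i,j,u,v}. prob (ev x (AA x))) = prob (ev i A) * prob (ev j A) * prob (ev u B) * prob (ev v B)"
    using assms unfolding AA_def by (simp add: mult.assoc)
  ultimately show ?thesis by simp
qed

lemma prob3:
  assumes "distinct [i,j,l]" "1 \<le> i" "1 \<le> j" "1 \<le> l"
  shows "prob (ev i A \<inter> ev j A \<inter> ev l A) = prob (ev i A) * prob (ev j A) * prob (ev l A)"
proof -
  have "prob (\<Inter>x\<in>{i,j,l}. ev x A) = (\<Prod>x\<in>{i,j,l}. prob (ev x A))"
    using assms by (intro prob_inter) auto
  moreover have "(\<Inter>x\<in>{i,j,l}. ev x A) = ev i A \<inter> ev j A \<inter> ev l A" by auto
  moreover have "(\<Prod>x\<in>{i,j,l}. prob (ev x A)) = prob (ev i A) * prob (ev j A) * prob (ev l A)"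
    using assms by (simp add: mult.assoc)
  ultimately show ?thesis by simp
qed

lemma prob_Z: "prob (Zs n) \<le> 0"
proof -
  have "prob (Zs n) \<le> real (card {1..n}) * 0" unfolding Zs_def
    by (rule UN_card) (auto simp: prob_single pw_def)
  then show ?thesis by simp
qed

lemma prob_E0: "prob (E0s n) \<le> real n / (real n ^ 3 + 1)"
proof -
  have "prob (E0s n) \<le> real (card {1..n}) * (1 / (real (n^3) + 1))" unfolding E0s_def
  proof (rule UN_card)
    fix i assume "i \<in> {1..n}"
    then show "prob (ev i {z. \<bar>z\<bar> > int (n^3)}) \<le> 1 / (real (n^3) + 1)" using prob_gt[of i "n^3"] by simp
  qed auto
  then show ?thesis by simp
qed

lemma prob_E1: assumes "n \<ge> 3" shows "prob (E1s n) \<le> 3 * (1 - 1 / (real (mm n) + 1)) ^ qq n"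
proof -
  have q1: "qq n \<ge> 1" using assms unfolding qq_def by simp
  have "prob (E1s n) \<le> real (card {0..<3::nat}) * (1 - 1 / (real (mm n) + 1)) ^ qq n" unfolding E1s_def
  proof (rule UN_card)
    fix b :: nat assume b: "b \<in> {0..<3}"
    show "space M \<inter> (\<Inter>i\<in>Blk n b. ev i {z. \<bar>z\<bar> \<le> int (mm n)}) \<in> events"
      by (rule space_INT_ev) (auto simp: Blk_def)
    have ne: "Blk n b \<noteq> {}" using q1 unfolding Blk_def by auto
    have sub: "(\<Inter>i\<in>Blk n b. ev i {z. \<bar>z\<bar> \<le> int (mm n)}) \<subseteq> space M"
      using ne unfolding ev_def by auto
    have "prob (space M \<inter> (\<Inter>i\<in>Blk n b. ev i {z. \<bar>z\<bar> \<le> int (mm n)}))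
        = prob (\<Inter>i\<in>Blk n b. ev i {z. \<bar>z\<bar> \<le> int (mm n)})" using sub by (simp add: Int_absorb1)
    also have "\<dots> = (\<Prod>i\<in>Blk n b. prob (ev i {z. \<bar>z\<bar> \<le> int (mm n)}))"
      using ne by (intro prob_inter) (auto simp: Blk_def)
    also have "\<dots> = (\<Prod>i\<in>Blk n b. (1 - 1 / (real (mm n) + 1)))"
      by (intro prod.cong refl prob_le) (auto simp: Blk_def)
    also have "\<dots> = (1 - 1 / (real (mm n) + 1)) ^ qq n" unfolding Blk_def by simp
    finally show "prob (space M \<inter> (\<Inter>i\<in>Blk n b. ev i {z. \<bar>z\<bar> \<le> int (mm n)})) \<le> (1 - 1 / (real (mm n) + 1)) ^ qq n"
      by simp
  qed simp
  then show ?thesis by simp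
qed

lemma prob_E2: "prob (E2s n) \<le> real n ^ 4 * (\<Sum>k\<in>Kr n. pl k ^ 2) ^ 2"
proof -
  define c where "c = (\<Sum>k\<in>Kr n. pl k ^ 2) ^ 2"
  have c0: "0 \<le> c" unfolding c_def by simp
  have inner: "prob (\<Union>k\<in>Kr n. \<Union>k'\<in>Kr n.
     (if distinct [i,j,u,v] then ev i (Lv k) \<inter> ev j (Lv k) \<inter> ev u (Lv k') \<inter> ev v (Lv k') else {})) \<le> c"
    if ij: "i \<in> {1..n}" "j \<in> {1..n}" "u \<in> {1..n}" "v \<in> {1..n}" for i j u v
  proof (cases "distinct [i,j,u,v]")
    case False then show ?thesis using c0 by auto
  next
    case True
    have "prob (\<Union>k\<in>Kr n. \<Union>k'\<in>Kr n. ev i (Lv k) \<inter> ev j (Lv k) \<inter> ev u (Lv k') \<inter> ev v (Lv k'))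
       \<le> (\<Sum>k\<in>Kr n. \<Sum>k'\<in>Kr n. pl k ^ 2 * pl k' ^ 2)"
    proof (rule UN_bound)
      fix k assume "k \<in> Kr n"
      show "(\<Union>k'\<in>Kr n. ev i (Lv k) \<inter> ev j (Lv k) \<inter> ev u (Lv k') \<inter> ev v (Lv k')) \<in> events"
        using ij by (intro sets.finite_UN sets.Int ev_sets) (auto simp: Kr_def)
      show "prob (\<Union>k'\<in>Kr n. ev i (Lv k) \<inter> ev j (Lv k) \<inter> ev u (Lv k') \<inter> ev v (Lv k')) \<le> (\<Sum>k'\<in>Kr n. pl k ^ 2 * pl k' ^ 2)"
      proof (rule UN_bound)
        fix k' assume "k' \<in> Kr n"
        show "ev i (Lv k) \<inter> ev j (Lv k) \<inter> ev u (Lv k') \<inter> ev v (Lv k') \<in> events" using ij by (intro sets.Int ev_sets) auto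
        show "prob (ev i (Lv k) \<inter> ev j (Lv k) \<inter> ev u (Lv k') \<inter> ev v (Lv k')) \<le> pl k ^ 2 * pl k' ^ 2"
          using prob4[OF True] ij by (simp add: Lv_def prob_lev power2_eq_square)
      qed (simp add: Kr_def)
    qed (simp add: Kr_def)
    also have "\<dots> = c" unfolding c_def power2_eq_square[of "sum _ _"] by (simp add: sum_product)
    finally show ?thesis using True by simp
  qed
  have "prob (E2s n) \<le> real (card {1..n}) * (real (card {1..n}) * (real (card {1..n}) * (real (card {1..n}) * c)))"
    unfolding E2s_def
    apply (rule UN_card, simp)
    subgoal by (intro sets.finite_UN if_ev sets.Int ev_sets; auto simp: Kr_def)
    apply (rule UN_card, simp)
    subgoal by (intro sets.finite_UN if_ev sets.Int ev_sets; auto simp: Kr_def)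
    apply (rule UN_card, simp)
    subgoal by (intro sets.finite_UN if_ev sets.Int ev_sets; auto simp: Kr_def)
    apply (rule UN_card, simp)
    subgoal by (intro sets.finite_UN if_ev sets.Int ev_sets; auto simp: Kr_def)
    apply (rule inner; simp)
    done
  then show ?thesis unfolding c_def by (simp add: power4_eq_xxxx mult.assoc)
qed

end



definition gg :: "nat \<Rightarrow> real" where
  "gg n = real n / (real n ^ 3 + 1) + 3 * exp (-(real n / 3 - 1) / (tt n + 1)) + real n ^ 4 * (1 / tt n) ^ 6 + real n ^ 3 * (1 / tt n) ^ 5"

lemma gg_ev: "eventually (\<lambda>n. gg n \<le> real n powr (-13/10)) sequentially"
  unfolding gg_def tt_def by real_asymp

lemma tt_pos: "n \<ge> 1 \<Longrightarrow> tt n > 0" unfolding tt_def by simp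

context walk begin

lemma Zs_sets: "Zs n \<in> events" unfolding Zs_def by (intro sets.finite_UN) auto
lemma E0s_sets: "E0s n \<in> events" unfolding E0s_def by (intro sets.finite_UN) auto
lemma E1s_sets: "E1s n \<in> events" unfolding E1s_def
    by (intro sets.finite_UN space_INT_ev) (auto simp: Blk_def)
lemma E2s_sets: "E2s n \<in> events" unfolding E2s_def
    by (intro sets.finite_UN if_ev sets.Int ev_sets) (auto simp: Kr_def)
lemma E3s_sets: "E3s n \<in> events" unfolding E3s_def
    by (intro sets.finite_UN if_ev sets.Int ev_sets) (auto simp: Kr_def)

lemma prob_E3: "prob (E3s n) \<le> real n ^ 3 * (\<Sum>k\<in>Kr n. pl k ^ 3)"
proof -
  define c where "c = (\<Sum>k\<in>Kr n. pl k ^ 3)"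
  have c0: "0 \<le> c" unfolding c_def by (intro sum_nonneg) (auto simp: Kr_def pl_def field_simps)
  have inner: "prob (\<Union>k\<in>Kr n. (if distinct [i,j,l] then ev i (Lv k) \<inter> ev j (Lv k) \<inter> ev l (Lv k) else {})) \<le> c"
    if ij: "i \<in> {1..n}" "j \<in> {1..n}" "l \<in> {1..n}" for i j l
  proof (cases "distinct [i,j,l]")
    case False then show ?thesis using c0 by auto
  next
    case True
    have "prob (\<Union>k\<in>Kr n. ev i (Lv k) \<inter> ev j (Lv k) \<inter> ev l (Lv k)) \<le> (\<Sum>k\<in>Kr n. pl k ^ 3)"
    proof (rule UN_bound)
      fix k assume "k \<in> Kr n"
      show "ev i (Lv k) \<inter> ev j (Lv k) \<inter> ev l (Lv k) \<in> events" using ij by (intro sets.Int ev_sets) auto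
      show "prob (ev i (Lv k) \<inter> ev j (Lv k) \<inter> ev l (Lv k)) \<le> pl k ^ 3"
        using prob3[OF True] ij by (simp add: Lv_def prob_lev power3_eq_cube)
    qed (simp add: Kr_def)
    then show ?thesis using True unfolding c_def by simp
  qed
  have "prob (E3s n) \<le> real (card {1..n}) * (real (card {1..n}) * (real (card {1..n}) * c))"
    unfolding E3s_def
    apply (rule UN_card, simp)
    subgoal by (intro sets.finite_UN if_ev sets.Int ev_sets; auto simp: Kr_def)
    apply (rule UN_card, simp)
    subgoal by (intro sets.finite_UN if_ev sets.Int ev_sets; auto simp: Kr_def)
    apply (rule UN_card, simp)
    subgoal by (intro sets.finite_UN if_ev sets.Int ev_sets; auto simp: Kr_def)
    apply (rule inner; simp)
    done
  then show ?thesis unfolding c_def by (simp add: power3_eq_cube mult.assoc)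
qed

lemma prob_Bad: assumes n3: "n \<ge> 3" shows "prob (Bad n) \<le> gg n"
proof -
  define x where "x = 1 / (real (mm n) + 1)"
  define y where "y = 1 / tt n"
  have tp: "tt n > 0" using tt_pos n3 by simp
  have x0: "0 \<le> x" unfolding x_def by simp
  have xy: "x \<le> y" unfolding x_def y_def using tp mm_gt[of n] by (intro divide_left_mono) auto
  have "prob (Bad n) \<le> prob (Zs n) + prob (E0s n) + prob (E1s n) + prob (E2s n) + prob (E3s n)"
    unfolding Bad_def using Zs_sets E0s_sets E1s_sets E2s_sets E3s_sets
    by (smt (verit) measure_Un_le sets.Un)
  moreover have "prob (E1s n) \<le> 3 * exp (-(real n / 3 - 1) / (tt n + 1))"
  proof -
    have a: "1 - x \<le> exp (-x)" using exp_ge_add_one_self[of "-x"] by simp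
    have x1: "x \<le> 1" unfolding x_def by simp
    have "(1 - x) ^ qq n \<le> exp (-x) ^ qq n" using a x1 by (intro power_mono) auto
    also have "\<dots> = exp (real (qq n) * (-x))" by (rule exp_of_nat_mult[symmetric])
    also have "\<dots> \<le> exp (-(real n / 3 - 1) / (tt n + 1))"
    proof -
      have q: "real (qq n) \<ge> real n / 3 - 1" unfolding qq_def by linarith
      have "(real n / 3 - 1) / (tt n + 1) \<le> real (qq n) * x"
      proof (cases "real n / 3 - 1 \<le> 0")
        case True
        then have "(real n / 3 - 1) / (tt n + 1) \<le> 0" using tp by (simp add: divide_nonpos_pos)
        also have "0 \<le> real (qq n) * x" using x0 by simp
        finally show ?thesis .
      next
        case False
        have "(real n / 3 - 1) / (tt n + 1) \<le> real (qq n) / (tt n + 1)" using q tp by (intro divide_right_mono) auto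
        also have "\<dots> \<le> real (qq n) / (real (mm n) + 1)" using mm_le[of n] tp by (intro divide_left_mono) auto
        also have "\<dots> = real (qq n) * x" unfolding x_def by simp
        finally show ?thesis .
      qed
      moreover have e: "-(real n / 3 - 1) / (tt n + 1) = - ((real n / 3 - 1) / (tt n + 1))"
        by (rule minus_divide_left[symmetric])
      moreover have "real (qq n) * (-x) = -(real (qq n) * x)" by simp
      ultimately show ?thesis by (simp only: exp_le_cancel_iff)
    qed
    finally show ?thesis using prob_E1[OF n3] unfolding x_def by linarith
  qed
  moreover have "prob (E2s n) \<le> real n ^ 4 * y ^ 6"
  proof -
    have s: "(\<Sum>k\<in>Kr n. pl k ^ 2) \<le> x ^ 3" using pl_sum2[of "mm n" "n^3"] unfolding Kr_def x_def by (simp add: power_one_over)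
    have s0: "0 \<le> (\<Sum>k\<in>Kr n. pl k ^ 2)" by (intro sum_nonneg) simp
    have "(\<Sum>k\<in>Kr n. pl k ^ 2) ^ 2 \<le> (x ^ 3) ^ 2" using s s0 by (intro power_mono) auto
    also have "\<dots> = x ^ 6" by simp
    also have "\<dots> \<le> y ^ 6" using xy x0 by (intro power_mono) auto
    finally show ?thesis using prob_E2[of n] by (meson mult_left_mono order_trans zero_le_power of_nat_0_le_iff)
  qed
  moreover have "prob (E3s n) \<le> real n ^ 3 * y ^ 5"
  proof -
    have s: "(\<Sum>k\<in>Kr n. pl k ^ 3) \<le> x ^ 5" using pl_sum3[of "mm n" "n^3"] unfolding Kr_def x_def by (simp add: power_one_over)
    also have "\<dots> \<le> y ^ 5" using xy x0 by (intro power_mono) auto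
    finally show ?thesis using prob_E3[of n] by (meson mult_left_mono order_trans zero_le_power of_nat_0_le_iff)
  qed
  ultimately show ?thesis using prob_Z[of n] prob_E0[of n] unfolding gg_def y_def by linarith
qed

end



context walk begin

lemma good:
  assumes n3: "n \<ge> 3" and sp: "\<omega> \<in> space M" and nb: "\<omega> \<notin> Bad n"
  shows "(\<forall>i. 1 \<le> i \<longrightarrow> i \<le> n \<longrightarrow> \<xi> i \<omega> \<noteq> 0) \<and>
    (\<exists>K > int (mm n). \<bar>\<Sum>i\<in>{1..n}. of_int (sgn (\<xi> i \<omega>)) * EE \<bar>\<xi> i \<omega>\<bar>\<bar> \<ge> EE K - real n * EE (K - 1))"
proof -
  define \<zeta> where "\<zeta> i = \<xi> i \<omega>" for i
  have nz: "\<forall>i. 1 \<le> i \<longrightarrow> i \<le> n \<longrightarrow> \<zeta> i \<noteq> 0"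
    using nb sp unfolding Bad_def Zs_def ev_def \<zeta>_def by auto
  have bd: "\<And>i. i \<in> {1..n} \<Longrightarrow> \<bar>\<zeta> i\<bar> \<le> int (n^3)"
    using nb sp unfolding Bad_def E0s_def ev_def \<zeta>_def by force
  have blk: "\<exists>i\<in>Blk n b. \<bar>\<zeta> i\<bar> > int (mm n)" if "b < 3" for b
  proof (rule ccontr)
    assume "\<not> ?thesis"
    then have "\<omega> \<in> space M \<inter> (\<Inter>i\<in>Blk n b. ev i {z. \<bar>z\<bar> \<le> int (mm n)})"
      using sp unfolding ev_def \<zeta>_def by auto
    then have "\<omega> \<in> E1s n" using that unfolding E1s_def by auto
    then show False using nb unfolding Bad_def by auto
  qed
  have q: "3 * qq n \<le> n" unfolding qq_def by simp
  obtain a1 where a1: "a1 \<in> Blk n 0" "\<bar>\<zeta> a1\<bar> > int (mm n)" using blk[of 0] by auto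
  obtain a2 where a2: "a2 \<in> Blk n 1" "\<bar>\<zeta> a2\<bar> > int (mm n)" using blk[of 1] by auto
  obtain a3 where a3: "a3 \<in> Blk n 2" "\<bar>\<zeta> a3\<bar> > int (mm n)" using blk[of 2] by auto
  have ain: "a1 \<in> {1..n}" "a2 \<in> {1..n}" "a3 \<in> {1..n}" "a1 \<noteq> a2" "a1 \<noteq> a3" "a2 \<noteq> a3"
    using a1(1) a2(1) a3(1) q unfolding Blk_def by auto
  have kr: "nat \<bar>\<zeta> i\<bar> \<in> Kr n" if "i \<in> {1..n}" "\<bar>\<zeta> i\<bar> > int (mm n)" for i
    using bd[OF that(1)] that(2) unfolding Kr_def by (auto simp: nat_le_iff)
  have lv: "\<omega> \<in> ev i (Lv (nat \<bar>\<zeta> j\<bar>))" if "\<bar>\<zeta> i\<bar> = \<bar>\<zeta> j\<bar>" for i j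
    using that sp unfolding ev_def Lv_def \<zeta>_def by auto
  have no3: "\<not>(\<exists>i j l. i\<in>{1..n} \<and> j\<in>{1..n} \<and> l\<in>{1..n} \<and> distinct [i,j,l] \<and> \<bar>\<zeta> i\<bar> > int (mm n) \<and> \<bar>\<zeta> j\<bar> = \<bar>\<zeta> i\<bar> \<and> \<bar>\<zeta> l\<bar> = \<bar>\<zeta> i\<bar>)"
  proof
    assume "\<exists>i j l. i\<in>{1..n} \<and> j\<in>{1..n} \<and> l\<in>{1..n} \<and> distinct [i,j,l] \<and> \<bar>\<zeta> i\<bar> > int (mm n) \<and> \<bar>\<zeta> j\<bar> = \<bar>\<zeta> i\<bar> \<and> \<bar>\<zeta> l\<bar> = \<bar>\<zeta> i\<bar>"
    then obtain i j l where h: "i\<in>{1..n}" "j\<in>{1..n}" "l\<in>{1..n}" "distinct [i,j,l]" "\<bar>\<zeta> i\<bar> > int (mm n)" "\<bar>\<zeta> j\<bar> = \<bar>\<zeta> i\<bar>" "\<bar>\<zeta> l\<bar> = \<bar>\<zeta> i\<bar>"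
      by blast
    define k where "k = nat \<bar>\<zeta> i\<bar>"
    have kin: "k \<in> Kr n" using kr h(1,5) unfolding k_def by blast
    have m: "\<omega> \<in> ev i (Lv k)" "\<omega> \<in> ev j (Lv k)" "\<omega> \<in> ev l (Lv k)"
      using lv[of i i] lv[of j i] lv[of l i] h(6,7) unfolding k_def by auto
    have "\<omega> \<in> (if distinct [i,j,l] then ev i (Lv k) \<inter> ev j (Lv k) \<inter> ev l (Lv k) else {})"
      using h(4) m by (simp only: if_True) blast
    then have "\<omega> \<in> E3s n" unfolding E3s_def
      by (intro UN_I[OF h(1)] UN_I[OF h(2)] UN_I[OF h(3)] UN_I[OF kin])
    then show False using nb unfolding Bad_def by auto
  qed
  have no22: "\<not>(\<exists>i j u v. i\<in>{1..n} \<and> j\<in>{1..n} \<and> u\<in>{1..n} \<and> v\<in>{1..n} \<and> distinct [i,j,u,v] \<and> \<bar>\<zeta> i\<bar> > int (mm n) \<and> \<bar>\<zeta> j\<bar> = \<bar>\<zeta> i\<bar> \<and> \<bar>\<zeta> u\<bar> > int (mm n) \<and> \<bar>\<zeta> v\<bar> = \<bar>\<zeta> u\<bar>)"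
  proof
    assume "\<exists>i j u v. i\<in>{1..n} \<and> j\<in>{1..n} \<and> u\<in>{1..n} \<and> v\<in>{1..n} \<and> distinct [i,j,u,v] \<and> \<bar>\<zeta> i\<bar> > int (mm n) \<and> \<bar>\<zeta> j\<bar> = \<bar>\<zeta> i\<bar> \<and> \<bar>\<zeta> u\<bar> > int (mm n) \<and> \<bar>\<zeta> v\<bar> = \<bar>\<zeta> u\<bar>"
    then obtain i j u v where h: "i\<in>{1..n}" "j\<in>{1..n}" "u\<in>{1..n}" "v\<in>{1..n}" "distinct [i,j,u,v]" "\<bar>\<zeta> i\<bar> > int (mm n)" "\<bar>\<zeta> j\<bar> = \<bar>\<zeta> i\<bar>" "\<bar>\<zeta> u\<bar> > int (mm n)" "\<bar>\<zeta> v\<bar> = \<bar>\<zeta> u\<bar>"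
      by blast
    define k where "k = nat \<bar>\<zeta> i\<bar>"
    define k' where "k' = nat \<bar>\<zeta> u\<bar>"
    have kin: "k \<in> Kr n" using kr h(1,6) unfolding k_def by blast
    have kin': "k' \<in> Kr n" using kr h(3,8) unfolding k'_def by blast
    have m: "\<omega> \<in> ev i (Lv k)" "\<omega> \<in> ev j (Lv k)" "\<omega> \<in> ev u (Lv k')" "\<omega> \<in> ev v (Lv k')"
      using lv[of i i] lv[of j i] lv[of u u] lv[of v u] h(7,9) unfolding k_def k'_def by auto
    have "\<omega> \<in> (if distinct [i,j,u,v] then ev i (Lv k) \<inter> ev j (Lv k) \<inter> ev u (Lv k') \<inter> ev v (Lv k') else {})"
      using h(5) m by (simp only: if_True) blast
    then have "\<omega> \<in> E2s n" unfolding E2s_def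
      by (intro UN_I[OF h(1)] UN_I[OF h(2)] UN_I[OF h(3)] UN_I[OF h(4)] UN_I[OF kin] UN_I[OF kin'])
    then show False using nb unfolding Bad_def by auto
  qed
  have "\<exists>K > int (mm n). \<bar>\<Sum>i\<in>{1..n}. of_int (sgn (\<zeta> i)) * EE \<bar>\<zeta> i\<bar>\<bar> \<ge> EE K - real n * EE (K - 1)"
    by (rule comb[OF _ ain a1(2) a2(2) a3(2) no3 no22]) simp
  then show ?thesis using nz unfolding \<zeta>_def by auto
qed

lemma main:
  assumes C: "\<forall>j. j \<noteq> 0 \<longrightarrow> (\<forall>y. \<bar>ft j y - shift_map j y\<bar> \<le> C)"
  shows "AE \<omega> in M. finite {n. comp_seq (\<lambda>i. ft (\<xi> i \<omega>)) n x \<in> {a..b}}"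
proof -
  have C0: "0 \<le> C" using C by (metis abs_ge_zero one_neq_zero order_trans)
  define R where "R = \<bar>x\<bar> + \<bar>a\<bar> + \<bar>b\<bar>"
  have R0: "0 \<le> R" unfolding R_def by simp
  obtain N1 where N1: "\<And>n K. n \<ge> N1 \<Longrightarrow> real_of_int K > real n powr (9/10) \<Longrightarrow> EE K - real n * EE (K - 1) > R + real n * C"
    using dom_num[OF R0 C0] by blast
  have summ: "summable (\<lambda>n. measure M (Bad n))"
  proof (rule summable_comparison_test_ev)
    show "summable (\<lambda>n. real n powr (-13/10))" by (simp add: summable_real_powr_iff)
    have "eventually (\<lambda>n. n \<ge> 3) sequentially" by (simp add: eventually_ge_at_top)
    then show "eventually (\<lambda>n. norm (measure M (Bad n)) \<le> real n powr (-13/10)) sequentially"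
      using gg_ev
    proof eventually_elim
      case (elim n)
      then show ?case using prob_Bad[of n] by simp
    qed
  qed
  have BC: "AE \<omega> in M. eventually (\<lambda>n. \<omega> \<in> space M - Bad n) sequentially"
    by (rule borel_cantelli_AE1) (auto simp: Bad_sets summ less_top[symmetric])
  show ?thesis
    using BC AE_space
  proof eventually_elim
    case (elim \<omega>)
    then obtain N2 where N2: "\<And>n. n \<ge> N2 \<Longrightarrow> \<omega> \<notin> Bad n" by (auto simp: eventually_sequentially)
    have "{n. comp_seq (\<lambda>i. ft (\<xi> i \<omega>)) n x \<in> {a..b}} \<subseteq> {..max (max N1 N2) 3}"
    proof
      fix n assume inJ: "n \<in> {n. comp_seq (\<lambda>i. ft (\<xi> i \<omega>)) n x \<in> {a..b}}"
      show "n \<in> {..max (max N1 N2) 3}"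
      proof (rule ccontr)
        assume "n \<notin> {..max (max N1 N2) 3}"
        then have n: "n \<ge> N1" "n \<ge> N2" "n \<ge> 3" by auto
        note g = good[OF n(3) elim(2) N2[OF n(2)]]
        have nz: "\<forall>i. 1 \<le> i \<longrightarrow> i \<le> n \<longrightarrow> \<xi> i \<omega> \<noteq> 0" using g by (rule conjunct1)
        obtain K where K: "K > int (mm n)" "\<bar>\<Sum>i\<in>{1..n}. of_int (sgn (\<xi> i \<omega>)) * EE \<bar>\<xi> i \<omega>\<bar>\<bar> \<ge> EE K - real n * EE (K - 1)"
          using conjunct2[OF g] by blast
        have "real_of_int K \<ge> real (mm n) + 1" using K(1) by linarith
        then have "real_of_int K > real n powr (9/10)" using mm_gt[of n] unfolding tt_def by linarith
        then have big: "EE K - real n * EE (K - 1) > R + real n * C" using N1[OF n(1)] by blast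
        have p: "\<bar>comp_seq (\<lambda>i. ft (\<xi> i \<omega>)) n x - (x + (\<Sum>i\<in>{1..n}. of_int (sgn (\<xi> i \<omega>)) * EE \<bar>\<xi> i \<omega>\<bar>))\<bar> \<le> real n * C"
          using perturb[OF C, of n "\<lambda>i. \<xi> i \<omega>"] nz by blast
        have "comp_seq (\<lambda>i. ft (\<xi> i \<omega>)) n x \<in> {a..b}" using inJ by simp
        then have "\<bar>comp_seq (\<lambda>i. ft (\<xi> i \<omega>)) n x - x\<bar> \<le> R" unfolding R_def by auto
        then show False using p K(2) big by linarith
      qed
    qed
    then show ?case by (rule finite_subset) simp
  qed
qed

end

theorem theorem5:
  fixes M :: "'w measure" and \<xi> :: "nat \<Rightarrow> 'w \<Rightarrow> int"
  assumes "prob_space M"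
    and meas: "\<And>n. n \<ge> 1 \<Longrightarrow> \<xi> n \<in> measurable M (count_space UNIV)"
    and indep: "prob_space.indep_vars M (\<lambda>_. count_space UNIV) \<xi> {1..}"
    and distr: "\<And>n j. n \<ge> 1 \<Longrightarrow> measure M {\<omega> \<in> space M. \<xi> n \<omega> = j} = pw j"
  shows "(\<forall>(x::real) (a::real) b.
            AE \<omega> in M. finite {n. comp_seq (\<lambda>i. shift_map (\<xi> i \<omega>)) n x \<in> {a..b}})
       \<and> (\<forall>ft :: int \<Rightarrow> real \<Rightarrow> real.
            (\<exists>C. \<forall>j. j \<noteq> 0 \<longrightarrow> (\<forall>y. \<bar>ft j y - shift_map j y\<bar> \<le> C)) \<longrightarrow>
            (\<forall>(x::real) (a::real) b.
               AE \<omega> in M. finite {n. comp_seq (\<lambda>i. ft (\<xi> i \<omega>)) n x \<in> {a..b}}))"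
proof -
  interpret walk M \<xi>
    using assms unfolding walk_def walk_axioms_def by auto
  have sm: "\<forall>j. j \<noteq> 0 \<longrightarrow> (\<forall>y. \<bar>shift_map j y - shift_map j y\<bar> \<le> 0)" by simp
  show ?thesis
  proof (intro conjI allI impI)
    fix x a b :: real
    show "AE \<omega> in M. finite {n. comp_seq (\<lambda>i. shift_map (\<xi> i \<omega>)) n x \<in> {a..b}}" by (rule main[OF sm])
  next
    fix ft :: "int \<Rightarrow> real \<Rightarrow> real" and x a b :: real
    assume "\<exists>C. \<forall>j. j \<noteq> 0 \<longrightarrow> (\<forall>y. \<bar>ft j y - shift_map j y\<bar> \<le> C)"
    then obtain C where "\<forall>j. j \<noteq> 0 \<longrightarrow> (\<forall>y. \<bar>ft j y - shift_map j y\<bar> \<le> C)" by blast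
    then show "AE \<omega> in M. finite {n. comp_seq (\<lambda>i. ft (\<xi> i \<omega>)) n x \<in> {a..b}}" by (rule main)
  qed
qed


end
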